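(* Let $a_1,\dots,a_n>0$, $B>0$, and $\tilde{x}\in\mathbb{R}^n$ with $\sum_j a_j\tilde{x}_j\neq0$. Then $\pi_{\mathrm{PoS}}(\tilde{x})$ is an optimal solution of $$\min_{v\in\Delta_n}\ \frac{B}{2}\big\|v-P^F(\tilde{x})\big\|_1. \qquad (\ast)$$ Moreover, if $\sum_{j=1}^na_j\tilde{x}_j>0$, then $\pi_{\mathrm{BL}}(\tilde{x})$ is also an optimal solution of $(\ast)$.
   Context: $\Delta_n=\{v\in\mathbb{R}^n:v\ge0,\ \sum_iv_i=1\}$. For $y$ with $\sum_ja_jy_j\ne0$, $P^F(y)_i=\frac{a_iy_i}{\sum_{j=1}^na_jy_j}$. The projection-onto-simplex mechanism is $\pi_{\mathrm{PoS}}(\tilde{x})=\arg\min_{v\in\Delta_n}\|v-P^F(\tilde{x})\|_2$. The baseline mechanism is $\pi_{\mathrm{BL}}(\tilde{x})_i=\frac{a_i(\tilde{x}_i)_+}{\sum_{j=1}^na_j(\tilde{x}_j)_+}$, where $(y)_+=\max\{y,0\}$ (well-defined when some $\tilde{x}_j>0$, in particular when $\sum_ja_j\tilde{x}_j>0$). *)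

theory Defs
  imports "HOL-Analysis.Analysis"
begin

definition prob_simplex :: "(real ^ 'n) set" where
  "prob_simplex = {v. (\<forall>i. 0 \<le> v $ i) \<and> (\<Sum>i\<in>UNIV. v $ i) = 1}"

definition PF :: "real ^ 'n \<Rightarrow> real ^ 'n \<Rightarrow> real ^ 'n" where
  "PF a y = (\<chi> i. a $ i * y $ i / (\<Sum>j\<in>UNIV. a $ j * y $ j))"

definition pi_PoS :: "real ^ 'n \<Rightarrow> real ^ 'n \<Rightarrow> real ^ 'n" where
  "pi_PoS a x = closest_point prob_simplex (PF a x)"

definition pi_BL :: "real ^ 'n \<Rightarrow> real ^ 'n \<Rightarrow> real ^ 'n" where
  "pi_BL a x = (\<chi> i. a $ i * max (x $ i) 0 / (\<Sum>j\<in>UNIV. a $ j * max (x $ j) 0))"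

definition l1norm :: "real ^ 'n \<Rightarrow> real" where
  "l1norm v = (\<Sum>i\<in>UNIV. \<bar>v $ i\<bar>)"

definition optimal_l1 :: "real \<Rightarrow> real ^ 'n \<Rightarrow> real ^ 'n \<Rightarrow> bool" where
  "optimal_l1 B p v \<longleftrightarrow> v \<in> prob_simplex \<and>
     (\<forall>w\<in>prob_simplex. B / 2 * l1norm (v - p) \<le> B / 2 * l1norm (w - p))"

end

theory Submission
  imports Defs
begin

lemma simplex_closed: "closed (prob_simplex :: (real^'n) set)"
proof -
  have "(prob_simplex :: (real^'n) set) = {v::real^'n. \<forall>i. 0 \<le> v $ i} \<inter> {v. (\<Sum>i\<in>UNIV. v $ i) = 1}"
    by (auto simp: prob_simplex_def)
  moreover have "closed {v::real^'n. \<forall>i. 0 \<le> v $ i}"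
    by (intro closed_Collect_all closed_Collect_le continuous_intros)
  moreover have "closed {v::real^'n. (\<Sum>i\<in>UNIV. v $ i) = 1}"
    by (intro closed_Collect_eq continuous_intros)
  ultimately show ?thesis by (metis closed_Int)
qed

lemma simplex_convex: "convex (prob_simplex :: (real^'n) set)"
  unfolding convex_def prob_simplex_def
  by (auto simp: sum.distrib sum_distrib_left[symmetric])

lemma simplex_nonempty: "(prob_simplex :: (real^'n) set) \<noteq> {}"
proof -
  fix k :: 'n
  have "((\<chi> i. if i = k then 1 else 0) :: real^'n) \<in> prob_simplex"
    by (simp add: prob_simplex_def)
  then show ?thesis by auto
qed

lemma opt_crit:
  fixes p w :: "real^'n" and B :: real
  assumes "0 < B" "(\<Sum>i\<in>UNIV. p $ i) = 1" "w \<in> prob_simplex"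
    and le: "\<forall>i. w $ i \<le> max (p $ i) 0"
  shows "optimal_l1 B p w"
proof -
  let ?M = "\<Sum>i\<in>UNIV. 2 * max (- p $ i) 0"
  have key: "l1norm (v - p) = ?M + (\<Sum>i\<in>UNIV. \<bar>(v - p) $ i\<bar> - ((p $ i - v $ i) + 2 * max (- p $ i) 0))"
    if "v \<in> prob_simplex" for v
  proof -
    have "(\<Sum>i\<in>UNIV. v $ i) = 1" using that by (auto simp: prob_simplex_def)
    then have "(\<Sum>i\<in>UNIV. p $ i - v $ i) = 0" using assms(2) by (simp add: sum_subtractf)
    then show ?thesis unfolding l1norm_def by (simp add: sum_subtractf sum.distrib)
  qed
  have w0: "\<forall>i. 0 \<le> w $ i" using assms(3) by (auto simp: prob_simplex_def)
  have eq: "l1norm (w - p) = ?M"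
  proof -
    have "\<forall>i. \<bar>(w - p) $ i\<bar> - ((p $ i - w $ i) + 2 * max (- p $ i) 0) = 0"
    proof
      fix i show "\<bar>(w - p) $ i\<bar> - ((p $ i - w $ i) + 2 * max (- p $ i) 0) = 0"
        using le[rule_format, of i] w0[rule_format, of i] by (auto simp: max_def abs_if)
    qed
    then show ?thesis using key[OF assms(3)] by simp
  qed
  have ge: "l1norm (w' - p) \<ge> ?M" if "w' \<in> prob_simplex" for w'
  proof -
    have w'0: "\<forall>i. 0 \<le> w' $ i" using that by (auto simp: prob_simplex_def)
    have "0 \<le> (\<Sum>i\<in>UNIV. \<bar>(w' - p) $ i\<bar> - ((p $ i - w' $ i) + 2 * max (- p $ i) 0))"
    proof (intro sum_nonneg)
      fix i show "0 \<le> \<bar>(w' - p) $ i\<bar> - ((p $ i - w' $ i) + 2 * max (- p $ i) 0)"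
        using w'0[rule_format, of i] by (auto simp: max_def abs_if)
    qed
    then show ?thesis using key[OF that] by simp
  qed
  show ?thesis unfolding optimal_l1_def using assms(1,3) eq ge
    by (auto intro: mult_left_mono)
qed

lemma PF_sum:
  fixes a x :: "real^'n"
  assumes "(\<Sum>j\<in>UNIV. a $ j * x $ j) \<noteq> 0"
  shows "(\<Sum>i\<in>UNIV. PF a x $ i) = 1"
  using assms by (simp add: PF_def sum_divide_distrib[symmetric])

lemma PoS_le:
  fixes p :: "real^'n"
  assumes "(\<Sum>i\<in>UNIV. p $ i) = 1"
  shows "\<forall>i. closest_point prob_simplex p $ i \<le> max (p $ i) 0"
proof (rule ccontr)
  let ?w = "closest_point prob_simplex p"
  assume "\<not> ?thesis"
  then obtain k where k: "?w $ k > max (p $ k) 0" by (auto simp: not_le)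
  have wS: "?w \<in> prob_simplex"
    using closest_point_in_set[OF simplex_closed simplex_nonempty] .
  have w0: "\<forall>i. 0 \<le> ?w $ i" "(\<Sum>i\<in>UNIV. ?w $ i) = 1" using wS by (auto simp: prob_simplex_def)
  have "\<exists>j. ?w $ j < p $ j"
  proof (rule ccontr)
    assume "\<not> ?thesis"
    then have "\<forall>j. p $ j \<le> ?w $ j" by (auto simp: not_less)
    moreover have "p $ k < ?w $ k" using k by auto
    ultimately have "(\<Sum>i\<in>UNIV. p $ i) < (\<Sum>i\<in>UNIV. ?w $ i)"
      by (intro sum_strict_mono_ex1) auto
    then show False using assms w0 by simp
  qed
  then obtain j where j: "?w $ j < p $ j" by auto
  have jk: "j \<noteq> k" using j k by auto
  define y where "y = (\<chi> i. if i = k then 0 else if i = j then ?w $ j + ?w $ k else ?w $ i)"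
  have yw: "y - ?w = (\<chi> i. if i = k then - ?w $ k else if i = j then ?w $ k else 0)"
    by (simp add: y_def vec_eq_iff)
  have "y \<in> prob_simplex"
  proof -
    have "\<forall>i. 0 \<le> y $ i" using w0(1) by (auto simp: y_def)
    moreover have "(\<Sum>i\<in>UNIV. (y - ?w) $ i) = 0"
      using jk by (simp add: yw if_distrib sum.If_cases)
    then have "(\<Sum>i\<in>UNIV. y $ i) = 1" using w0(2) by (simp add: sum_subtractf)
    ultimately show ?thesis by (simp add: prob_simplex_def)
  qed
  then have "inner (p - ?w) (y - ?w) \<le> 0"
    using closest_point_dot[OF simplex_convex simplex_closed] by blast
  moreover have "inner (p - ?w) (y - ?w) = ?w $ k * ((p $ j - ?w $ j) - (p $ k - ?w $ k))"
    unfolding inner_vec_def yw using jk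
    by (simp add: if_distrib sum.If_cases algebra_simps)
  moreover have "?w $ k * ((p $ j - ?w $ j) - (p $ k - ?w $ k)) > 0"
    using k j by (intro mult_pos_pos) auto
  ultimately show False by linarith
qed

theorem theorem3:
  fixes a x :: "real ^ 'n" and B :: real
  assumes "\<forall>i. 0 < a $ i" and "0 < B"
    and "(\<Sum>j\<in>UNIV. a $ j * x $ j) \<noteq> 0"
  shows "optimal_l1 B (PF a x) (pi_PoS a x)
     \<and> ((\<Sum>j\<in>UNIV. a $ j * x $ j) > 0 \<longrightarrow> optimal_l1 B (PF a x) (pi_BL a x))"
proof
  have s: "(\<Sum>i\<in>UNIV. PF a x $ i) = 1" using PF_sum[OF assms(3)] .
  show "optimal_l1 B (PF a x) (pi_PoS a x)"
    unfolding pi_PoS_def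
    by (rule opt_crit[OF assms(2) s closest_point_in_set[OF simplex_closed simplex_nonempty] PoS_le[OF s]])
  show "(\<Sum>j\<in>UNIV. a $ j * x $ j) > 0 \<longrightarrow> optimal_l1 B (PF a x) (pi_BL a x)"
  proof
    define S where "S = (\<Sum>j\<in>UNIV. a $ j * x $ j)"
    define T where "T = (\<Sum>j\<in>UNIV. a $ j * max (x $ j) 0)"
    assume "(\<Sum>j\<in>UNIV. a $ j * x $ j) > 0"
    then have S: "S > 0" by (simp add: S_def)
    have "S \<le> T" unfolding S_def T_def
      using assms(1) by (intro sum_mono mult_left_mono) (auto simp: less_imp_le)
    with S have T: "T > 0" by linarith
    have nn: "\<forall>i. 0 \<le> a $ i * max (x $ i) 0" using assms(1) by (auto simp: less_imp_le)
    have "pi_BL a x \<in> prob_simplex"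
      unfolding prob_simplex_def pi_BL_def using T nn
      by (simp add: T_def[symmetric] sum_divide_distrib[symmetric])
    moreover have "\<forall>i. pi_BL a x $ i \<le> max (PF a x $ i) 0"
    proof
      fix i
      have "a $ i * max (x $ i) 0 / T \<le> a $ i * max (x $ i) 0 / S"
        using nn S \<open>S \<le> T\<close> by (intro divide_left_mono) auto
      also have "\<dots> = max (a $ i * x $ i / S) 0"
        using assms(1)[rule_format, of i] S by (auto simp: max_def divide_le_0_iff mult_le_0_iff zero_le_mult_iff)
      finally show "pi_BL a x $ i \<le> max (PF a x $ i) 0"
        by (simp add: pi_BL_def PF_def T_def[symmetric] S_def[symmetric])
    qed
    ultimately show "optimal_l1 B (PF a x) (pi_BL a x)"
      by (rule opt_crit[OF assms(2) s])
  qed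
qed

end
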